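(* Let $h\ge1$ and $m\ge1$ be integers. (a) Let $G$ be a finite Abelian group of order $v$ and $B=\{0,b_1,\dots,b_m\}\subseteq G$ a $B_h$ set (of cardinality $m+1$) that generates $G$. Then $\Lambda=\{\mathbf x\in\mathbb Z^m:\sum_{i=1}^m x_ib_i=0\}$ is a sublattice of $\mathbb Z^m$ with $d_a(\mathbf x,\mathbf y)>h$ for all distinct $\mathbf x,\mathbf y\in\Lambda$, and its density is $\mu(\Lambda)=1/v$. (b) Conversely, if $\Lambda'\subseteq\mathbb Z^m$ is a sublattice with $d_a(\mathbf x,\mathbf y)>h$ for all distinct $\mathbf x,\mathbf y\in\Lambda'$, then the quotient group $G=\mathbb Z^m/\Lambda'$ contains a $B_h$ set of cardinality $m+1$ that generates $G$.
   Context: A sublattice of $\mathbb Z^m$ is a subgroup of $(\mathbb Z^m,+)$. $d_a(\mathbf x,\mathbf y)=\max\{\sum_{i:x_i>y_i}(x_i-y_i),\sum_{i:x_i<y_i}(y_i-x_i)\}$. For an Abelian group $G$ (written additively), a set $B=\{b_0,\dots,b_m\}\subseteq G$ of $m+1$ elements is a $B_h$ set if the sums $b_{i_1}+\dots+b_{i_h}$, $0\le i_1\le\dots\le i_h\le m$, are pairwise different (for different index tuples). For $x_i\in\mathbb Z$, $x_ib_i$ denotes the $|x_i|$-fold sum of $b_i$ if $x_i\ge0$ and of $-b_i$ if $x_i<0$. The density of a lattice $\Lambda$ is $\mu(\Lambda)=\lim_{k\to\infty}|\Lambda\cap\{-k,\dots,k\}^m|/(2k+1)^m$. *)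

theory Defs
  imports "HOL-Analysis.Analysis" "HOL-Algebra.Algebra"
begin

text \<open>Integer vectors of Z^m, indexed by 1..m (zero outside).\<close>
definition zvec :: "nat \<Rightarrow> (nat \<Rightarrow> int) set" where
  "zvec m = {x. \<forall>i. i \<notin> {1..m} \<longrightarrow> x i = 0}"

definition Zm :: "nat \<Rightarrow> (nat \<Rightarrow> int) monoid" where
  "Zm m = \<lparr>carrier = zvec m, mult = (\<lambda>x y i. x i + y i), one = (\<lambda>i. 0)\<rparr>"

definition sublattice :: "nat \<Rightarrow> (nat \<Rightarrow> int) set \<Rightarrow> bool" where
  "sublattice m L \<longleftrightarrow> subgroup L (Zm m)"

definition d_a :: "nat \<Rightarrow> (nat \<Rightarrow> int) \<Rightarrow> (nat \<Rightarrow> int) \<Rightarrow> int" where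
  "d_a m x y = max (\<Sum>i\<in>{1..m}. if x i > y i then x i - y i else 0)
                   (\<Sum>i\<in>{1..m}. if x i < y i then y i - x i else 0)"

definition index_tuples :: "nat \<Rightarrow> nat \<Rightarrow> nat list set" where
  "index_tuples m h = {xs. length xs = h \<and> sorted xs \<and> set xs \<subseteq> {..m}}"

definition tuple_sum :: "('a, 'c) monoid_scheme \<Rightarrow> (nat \<Rightarrow> 'a) \<Rightarrow> nat list \<Rightarrow> 'a" where
  "tuple_sum G b xs = foldr (\<lambda>i acc. b i \<otimes>\<^bsub>G\<^esub> acc) xs \<one>\<^bsub>G\<^esub>"

definition Bh_set :: "('a, 'c) monoid_scheme \<Rightarrow> nat \<Rightarrow> nat \<Rightarrow> (nat \<Rightarrow> 'a) \<Rightarrow> bool" where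
  "Bh_set G h m b \<longleftrightarrow> (\<forall>i\<le>m. b i \<in> carrier G) \<and> inj_on b {..m}
     \<and> inj_on (tuple_sum G b) (index_tuples m h)"

definition kernel_lattice :: "('a, 'c) monoid_scheme \<Rightarrow> nat \<Rightarrow> (nat \<Rightarrow> 'a) \<Rightarrow> (nat \<Rightarrow> int) set" where
  "kernel_lattice G m b =
     {x \<in> zvec m. finprod G (\<lambda>i. b i [^]\<^bsub>G\<^esub> x i) {1..m} = \<one>\<^bsub>G\<^esub>}"

definition cube :: "nat \<Rightarrow> nat \<Rightarrow> (nat \<Rightarrow> int) set" where
  "cube m k = {x \<in> zvec m. \<forall>i\<in>{1..m}. \<bar>x i\<bar> \<le> int k}"

definition has_density :: "nat \<Rightarrow> (nat \<Rightarrow> int) set \<Rightarrow> real \<Rightarrow> bool" where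
  "has_density m L \<mu> \<longleftrightarrow>
     (\<lambda>k. real (card (L \<inter> cube m k)) / (2 * real k + 1) ^ m) \<longlonglongrightarrow> \<mu>"

end

theory Submission imports Defs "HOL-Real_Asymp.Real_Asymp" begin

lemma Zm_carrier[simp]: "carrier (Zm m) = zvec m" by (simp add: Zm_def)
lemma Zm_mult[simp]: "x \<otimes>\<^bsub>Zm m\<^esub> y = (\<lambda>i. x i + y i)" by (simp add: Zm_def)
lemma Zm_one[simp]: "\<one>\<^bsub>Zm m\<^esub> = (\<lambda>i. 0)" by (simp add: Zm_def)

lemma Zm_comm_group: "comm_group (Zm m)"
proof (rule comm_groupI)
  fix x assume "x \<in> carrier (Zm m)"
  then show "\<exists>y\<in>carrier (Zm m). y \<otimes>\<^bsub>Zm m\<^esub> x = \<one>\<^bsub>Zm m\<^esub>"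
    by (intro bexI[of _ "\<lambda>i. - x i"]) (auto simp: zvec_def)
qed (auto simp: zvec_def add.assoc add.commute)

lemma Zm_group: "group (Zm m)"
  using Zm_comm_group comm_group.axioms(2) by blast

lemma Zm_inv[simp]: "x \<in> zvec m \<Longrightarrow> inv\<^bsub>Zm m\<^esub> x = (\<lambda>i. - x i)"
  by (rule group.inv_equality[OF Zm_group]) (auto simp: zvec_def)

definition unitv :: "nat \<Rightarrow> nat \<Rightarrow> int" where
  "unitv i = (\<lambda>j. if j = i \<and> j \<noteq> 0 then 1 else 0)"

definition blocks :: "(nat \<Rightarrow> nat) \<Rightarrow> nat \<Rightarrow> nat list" where
  "blocks p n = concat (map (\<lambda>i. replicate (p i) i) [1..<Suc n])"

lemma blocks_Suc: "blocks p (Suc n) = blocks p n @ replicate (p (Suc n)) (Suc n)"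
  by (simp add: blocks_def)

lemma blocks_set: "set (blocks p n) = {j \<in> {1..n}. p j > 0}"
proof (induction n)
  case 0 then show ?case by (simp add: blocks_def)
next
  case (Suc n)
  have "{j \<in> {1..Suc n}. p j > 0} = {j \<in> {1..n}. p j > 0} \<union> (if p (Suc n) > 0 then {Suc n} else {})"
    by (auto simp: le_Suc_eq)
  then show ?case using Suc by (simp add: blocks_Suc)
qed

lemma blocks_length: "length (blocks p n) = (\<Sum>i\<in>{1..n}. p i)"
proof (induction n)
  case 0 then show ?case by (simp add: blocks_def)
next
  case (Suc n)
  have "{1..Suc n} = insert (Suc n) {1..n}" by auto
  then show ?case using Suc by (simp add: blocks_Suc)
qed

lemma blocks_sorted: "sorted (blocks p n)"
proof (induction n)
  case 0 then show ?case by (simp add: blocks_def)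
next
  case (Suc n)
  then show ?case by (auto simp: blocks_Suc sorted_append blocks_set)
qed

lemma cube_bij: "bij_betw (\<lambda>x. restrict x {1..m}) (cube m k) (PiE {1..m} (\<lambda>_. {- int k..int k}))"
proof (rule bij_betwI[where g="\<lambda>f i. if i \<in> {1..m} then f i else 0"])
  show "(\<lambda>x. restrict x {1..m}) \<in> cube m k \<rightarrow> PiE {1..m} (\<lambda>_. {- int k..int k})"
    by (auto simp: cube_def abs_le_iff)
  show "(\<lambda>f i. if i \<in> {1..m} then f i else 0) \<in> PiE {1..m} (\<lambda>_. {- int k..int k}) \<rightarrow> cube m k"
    by (auto simp: cube_def zvec_def PiE_def Pi_def abs_le_iff)
  show "\<And>x. x \<in> cube m k \<Longrightarrow> (\<lambda>i. if i \<in> {1..m} then restrict x {1..m} i else 0) = x"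
    by (auto simp: cube_def zvec_def)
  show "\<And>y. y \<in> PiE {1..m} (\<lambda>_. {- int k..int k}) \<Longrightarrow> restrict (\<lambda>i. if i \<in> {1..m} then y i else 0) {1..m} = y"
    by (auto simp: PiE_def extensional_def)
qed

lemma cube_finite: "finite (cube m k)"
  using bij_betw_finite[OF cube_bij] by (simp add: finite_PiE)

lemma cube_card: "card (cube m k) = (2 * k + 1) ^ m"
proof -
  have "card (cube m k) = card (PiE {1..m} (\<lambda>_. {- int k..int k}))"
    using bij_betw_same_card[OF cube_bij] .
  also have "\<dots> = (2 * k + 1) ^ m" by (simp add: card_PiE nat_add_distrib nat_mult_distrib)
  finally show ?thesis .
qed

lemma ratio_lim: "(\<lambda>k. (2 * real k + c) / (2 * real k + 1)) \<longlonglongrightarrow> 1"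
  by real_asymp

locale partA = comm_group +
  fixes m :: nat and b :: "nat \<Rightarrow> 'a"
  assumes bc: "\<And>i. i \<le> m \<Longrightarrow> b i \<in> carrier G"
begin

definition phi where "phi x = finprod G (\<lambda>i. b i [^]\<^bsub>G\<^esub> (x i::int)) {1..m}"

lemma phi_closed[simp]: "phi x \<in> carrier G"
  unfolding phi_def by (rule finprod_closed) (auto simp: bc)

lemma phi_add: "phi (\<lambda>i. x i + y i) = phi x \<otimes> phi y"
proof -
  have "finprod G (\<lambda>i. b i [^] (x i + y i)) {1..m} = finprod G (\<lambda>i. b i [^] x i \<otimes> b i [^] y i) {1..m}"
    by (rule finprod_cong') (auto simp: int_pow_mult bc)
  also have "\<dots> = phi x \<otimes> phi y" unfolding phi_def
    by (rule finprod_multf) (auto simp: bc)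
  finally show ?thesis unfolding phi_def .
qed

lemma phi_hom: "group_hom (Zm m) G phi"
  unfolding group_hom_def group_hom_axioms_def hom_def
  using Zm_group is_group by (auto simp: phi_add)

lemma kernel_eq: "kernel_lattice G m b = kernel (Zm m) G phi"
  unfolding kernel_lattice_def kernel_def phi_def by auto

lemma phi_e: assumes "i \<in> {1..m}" shows "phi (unitv i) = b i"
proof -
  have "phi (unitv i) = finprod G (\<lambda>j. if j = i then b j else \<one>) {1..m}"
    unfolding phi_def unitv_def by (rule finprod_cong') (use assms in \<open>auto simp: bc\<close>)
  also have "\<dots> = b i" by (rule finprod_singleton_swap) (use assms in \<open>auto simp: bc\<close>)
  finally show ?thesis .
qed

lemma unitv_zvec: "unitv i \<in> zvec m" if "i \<le> m" using that by (auto simp: unitv_def zvec_def)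

lemma phi_surj: assumes "b 0 = \<one>" "generate G (b ` {..m}) = carrier G"
  shows "phi ` zvec m = carrier G"
proof
  show "phi ` zvec m \<subseteq> carrier G" by auto
  have sg: "subgroup (phi ` zvec m) G"
    using group_hom.img_is_subgroup[OF phi_hom] by simp
  have "b ` {..m} \<subseteq> phi ` zvec m"
  proof
    fix y assume "y \<in> b ` {..m}"
    then obtain i where i: "i \<le> m" "y = b i" by auto
    show "y \<in> phi ` zvec m"
    proof (cases "i = 0")
      case True
      have "phi (\<lambda>_. 0) = \<one>" unfolding phi_def by simp
      moreover have "(\<lambda>_. 0) \<in> zvec m" by (simp add: zvec_def)
      ultimately show ?thesis using True i assms(1) by (metis image_eqI)
    next
      case False
      then show ?thesis using i phi_e[of i] unitv_zvec[of i] by (metis atLeastAtMost_iff image_eqI less_one not_le)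
    qed
  qed
  then show "carrier G \<subseteq> phi ` zvec m"
    using generate_subgroup_incl[OF _ sg] assms(2) by metis
qed



lemma ts_closed: "set xs \<subseteq> {..m} \<Longrightarrow> tuple_sum G b xs \<in> carrier G"
  by (induction xs) (auto simp: tuple_sum_def bc)

lemma ts_append: "set xs \<subseteq> {..m} \<Longrightarrow> set ys \<subseteq> {..m} \<Longrightarrow>
   tuple_sum G b (xs @ ys) = tuple_sum G b xs \<otimes> tuple_sum G b ys"
proof (induction xs)
  case Nil then show ?case using ts_closed[of ys] by (simp add: tuple_sum_def)
next
  case (Cons a xs)
  then show ?case using ts_closed[of xs] ts_closed[of ys]
    by (simp add: tuple_sum_def m_assoc bc)
qed

lemma ts_Cons: "tuple_sum G b (a # xs) = b a \<otimes> tuple_sum G b xs"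
  by (simp add: tuple_sum_def)

lemma ts_rep: "i \<le> m \<Longrightarrow> tuple_sum G b (replicate n i) = b i [^] n"
proof (induction n)
  case 0 then show ?case by (simp add: tuple_sum_def)
next
  case (Suc n) then show ?case using bc[of i] by (simp add: ts_Cons m_comm)
qed

lemma ts_blocks: "n \<le> m \<Longrightarrow> tuple_sum G b (blocks p n) = finprod G (\<lambda>i. b i [^] p i) {1..n}"
proof (induction n)
  case 0 then show ?case by (simp add: blocks_def tuple_sum_def)
next
  case (Suc n)
  have s1: "set (blocks p n) \<subseteq> {..m}" using Suc.prems by (auto simp: blocks_set)
  have s2: "set (replicate (p (Suc n)) (Suc n)) \<subseteq> {..m}" using Suc.prems by (auto simp: set_replicate_conv_if)
  have "tuple_sum G b (blocks p (Suc n)) = finprod G (\<lambda>i. b i [^] p i) {1..n} \<otimes> b (Suc n) [^] p (Suc n)"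
    using Suc ts_append[OF s1 s2] by (simp add: blocks_Suc ts_rep)
  also have "\<dots> = b (Suc n) [^] p (Suc n) \<otimes> finprod G (\<lambda>i. b i [^] p i) {1..n}"
    using Suc.prems by (intro m_comm) (auto intro!: finprod_closed simp: bc)
  also have "\<dots> = finprod G (\<lambda>i. b i [^] p i) (insert (Suc n) {1..n})"
    using Suc.prems by (subst finprod_insert) (auto simp: bc)
  also have "insert (Suc n) {1..n} = {1..Suc n}" by auto
  finally show ?case .
qed


lemma phi_nat: "phi (\<lambda>i. int (p i)) = finprod G (\<lambda>i. b i [^] p i) {1..m}"
  unfolding phi_def by (simp add: int_pow_int)

definition T where "T h p = replicate (h - (\<Sum>i\<in>{1..m}. p i)) 0 @ blocks p m"

lemma T_index: "(\<Sum>i\<in>{1..m}. p i) \<le> h \<Longrightarrow> T h p \<in> index_tuples m h"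
  unfolding index_tuples_def T_def
  by (auto simp: blocks_length sorted_append blocks_sorted blocks_set)

lemma T_sum: assumes "b 0 = \<one>" shows "tuple_sum G b (T h p) = phi (\<lambda>i. int (p i))"
proof -
  have "tuple_sum G b (T h p) = tuple_sum G b (replicate (h - (\<Sum>i\<in>{1..m}. p i)) 0) \<otimes> tuple_sum G b (blocks p m)"
    unfolding T_def by (rule ts_append) (auto simp: blocks_set)
  also have "\<dots> = phi (\<lambda>i. int (p i))"
    by (simp add: ts_rep ts_blocks phi_nat assms finprod_closed bc Pi_def)
  finally show ?thesis .
qed

lemma T_set: "i \<ge> 1 \<Longrightarrow> i \<in> set (T h p) \<longleftrightarrow> i \<in> {1..m} \<and> p i > 0"
  unfolding T_def by (auto simp: blocks_set)

lemma dist_part: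
  assumes b0: "b 0 = \<one>" and inj: "inj_on (tuple_sum G b) (index_tuples m h)"
    and x: "x \<in> kernel_lattice G m b" and y: "y \<in> kernel_lattice G m b" and xy: "x \<noteq> y"
  shows "d_a m x y > int h"
proof (rule ccontr)
  assume "\<not> d_a m x y > int h"
  then have dle: "d_a m x y \<le> int h" by simp
  define z where "z = (\<lambda>i. x i - y i)"
  define p where "p = (\<lambda>i. nat (x i - y i))"
  define q where "q = (\<lambda>i. nat (y i - x i))"
  have px: "phi x = \<one>" and py: "phi y = \<one>" and xz: "x \<in> zvec m" and yz: "y \<in> zvec m"
    using x y unfolding kernel_lattice_def phi_def by auto
  have "x = (\<lambda>i. z i + y i)" by (simp add: z_def)
  then have "phi x = phi z \<otimes> phi y" by (metis phi_add)
  then have pz: "phi z = \<one>" using px py by simp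
  have "phi (\<lambda>i. int (p i)) = phi (\<lambda>i. z i + int (q i))"
    by (rule arg_cong[where f=phi]) (auto simp: p_def q_def z_def)
  also have "\<dots> = phi (\<lambda>i. int (q i))" by (simp add: phi_add pz)
  finally have pq: "phi (\<lambda>i. int (p i)) = phi (\<lambda>i. int (q i))" .
  have "int (\<Sum>i\<in>{1..m}. p i) = (\<Sum>i\<in>{1..m}. if x i > y i then x i - y i else 0)"
    unfolding of_nat_sum p_def by (rule sum.cong) auto
  also have "\<dots> \<le> d_a m x y" unfolding d_a_def by simp
  finally have sp: "(\<Sum>i\<in>{1..m}. p i) \<le> h" using dle by linarith
  have "int (\<Sum>i\<in>{1..m}. q i) = (\<Sum>i\<in>{1..m}. if x i < y i then y i - x i else 0)"
    unfolding of_nat_sum q_def by (rule sum.cong) auto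
  also have "\<dots> \<le> d_a m x y" unfolding d_a_def by simp
  finally have sq: "(\<Sum>i\<in>{1..m}. q i) \<le> h" using dle by linarith
  have "T h p = T h q"
    using inj T_index[OF sp] T_index[OF sq] T_sum[OF b0] pq unfolding inj_on_def by metis
  have "\<exists>i\<in>{1..m}. x i \<noteq> y i"
  proof (rule ccontr)
    assume "\<not> ?thesis"
    then have "\<And>i. x i = y i" using xz yz unfolding zvec_def by (metis (mono_tags, lifting) mem_Collect_eq)
    then show False using xy by auto
  qed
  then obtain i where i: "i \<in> {1..m}" "x i \<noteq> y i" by blast
  show False
  proof (cases "x i > y i")
    case True
    then have "i \<in> set (T h p)" "i \<notin> set (T h q)" using i by (auto simp: T_set p_def q_def)
    then show False using \<open>T h p = T h q\<close> by simp
  next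
    case False
    then have "i \<notin> set (T h p)" "i \<in> set (T h q)" using i by (auto simp: T_set p_def q_def)
    then show False using \<open>T h p = T h q\<close> by simp
  qed
qed


definition fib where "fib g k = {x \<in> cube m k. phi x = g}"

lemma fib_finite: "finite (fib g k)"
  using cube_finite[of m k] unfolding fib_def by simp

lemma shift_le1:
  assumes y: "y \<in> zvec m" "\<forall>i\<in>{1..m}. \<bar>y i\<bar> \<le> int R"
  shows "card (fib \<one> k) \<le> card (fib (phi y) (k + R))"
proof (rule card_inj_on_le[where f="\<lambda>x i. x i + y i"])
  show "inj_on (\<lambda>x i. x i + y i) (fib \<one> k)"
    by (rule inj_onI) (simp add: fun_eq_iff)
  show "finite (fib (phi y) (k + R))" by (rule fib_finite)
  show "(\<lambda>x i. x i + y i) ` fib \<one> k \<subseteq> fib (phi y) (k + R)"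
  proof
    fix z assume "z \<in> (\<lambda>x i. x i + y i) ` fib \<one> k"
    then obtain x where x: "x \<in> fib \<one> k" "z = (\<lambda>i. x i + y i)" by auto
    have "phi z = phi y" using x by (simp add: phi_add fib_def)
    moreover have "z \<in> cube m (k + R)"
    proof -
      have "\<forall>i\<in>{1..m}. \<bar>x i\<bar> \<le> int k" "x \<in> zvec m" using x by (auto simp: fib_def cube_def)
      then show ?thesis using y x(2) unfolding cube_def zvec_def
        by (auto simp: abs_le_iff) (smt (verit) atLeastAtMost_iff)+
    qed
    ultimately show "z \<in> fib (phi y) (k + R)" by (simp add: fib_def)
  qed
qed

lemma shift_le2:
  assumes y: "y \<in> zvec m" "\<forall>i\<in>{1..m}. \<bar>y i\<bar> \<le> int R"
  shows "card (fib (phi y) k) \<le> card (fib \<one> (k + R))"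
proof (rule card_inj_on_le[where f="\<lambda>x i. x i - y i"])
  show "inj_on (\<lambda>x i. x i - y i) (fib (phi y) k)"
    by (rule inj_onI) (simp add: fun_eq_iff)
  show "finite (fib \<one> (k + R))" by (rule fib_finite)
  show "(\<lambda>x i. x i - y i) ` fib (phi y) k \<subseteq> fib \<one> (k + R)"
  proof
    fix z assume "z \<in> (\<lambda>x i. x i - y i) ` fib (phi y) k"
    then obtain x where x: "x \<in> fib (phi y) k" "z = (\<lambda>i. x i - y i)" by auto
    have "x = (\<lambda>i. z i + y i)" using x(2) by simp
    then have "phi x = phi z \<otimes> phi y" by (metis phi_add)
    then have "phi z \<otimes> phi y = \<one> \<otimes> phi y" using x by (simp add: fib_def)
    then have "phi z = \<one>" by (simp add: r_cancel)
    moreover have "z \<in> cube m (k + R)"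
    proof -
      have "\<forall>i\<in>{1..m}. \<bar>x i\<bar> \<le> int k" "x \<in> zvec m" using x by (auto simp: fib_def cube_def)
      then show ?thesis using y x(2) unfolding cube_def zvec_def
        by (auto simp: abs_le_iff) (smt (verit) atLeastAtMost_iff)+
    qed
    ultimately show "z \<in> fib \<one> (k + R)" by (simp add: fib_def)
  qed
qed

lemma cube_union: assumes "finite (carrier G)"
  shows "card (cube m k) = (\<Sum>g\<in>carrier G. card (fib g k))"
proof -
  have "cube m k = (\<Union>g\<in>carrier G. fib g k)" by (auto simp: fib_def)
  then have "card (cube m k) = card (\<Union>g\<in>carrier G. fib g k)" by simp
  also have "\<dots> = (\<Sum>g\<in>carrier G. card (fib g k))"
    using assms fib_finite by (intro card_UN_disjoint) (auto simp: fib_def)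
  finally show ?thesis .
qed

lemma density_part:
  assumes fin: "finite (carrier G)" and surj: "phi ` zvec m = carrier G"
  shows "has_density m (kernel_lattice G m b) (1 / real (order G))"
proof -
  define yy where "yy g = (SOME y. y \<in> zvec m \<and> phi y = g)" for g
  have yy: "yy g \<in> zvec m \<and> phi (yy g) = g" if "g \<in> carrier G" for g
  proof -
    have "\<exists>y. y \<in> zvec m \<and> phi y = g" using that surj by force
    then show ?thesis unfolding yy_def by (rule someI_ex)
  qed
  define R where "R = (\<Sum>g\<in>carrier G. \<Sum>i\<in>{1..m}. nat \<bar>yy g i\<bar>)"
  have Rb: "\<bar>yy g i\<bar> \<le> int R" if "g \<in> carrier G" "i \<in> {1..m}" for g i
  proof -
    have "nat \<bar>yy g i\<bar> \<le> (\<Sum>i\<in>{1..m}. nat \<bar>yy g i\<bar>)" using that by (intro member_le_sum) auto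
    also have "\<dots> \<le> R" unfolding R_def using that fin by (intro member_le_sum) auto
    finally show ?thesis by linarith
  qed
  define v where "v = card (carrier G)"
  have vpos: "v > 0" using fin unfolding v_def by (simp add: card_gt_0_iff) blast
  define F where "F k = card (fib \<one> k)" for k
  have up: "v * F k \<le> (2 * (k + R) + 1) ^ m" for k
  proof -
    have "v * F k = (\<Sum>g\<in>carrier G. F k)" by (simp add: v_def)
    also have "\<dots> \<le> (\<Sum>g\<in>carrier G. card (fib g (k + R)))"
    proof (rule sum_mono)
      fix g assume g: "g \<in> carrier G"
      show "F k \<le> card (fib g (k + R))"
        using shift_le1[of "yy g" R k] yy[OF g] Rb[OF g] unfolding F_def by auto
    qed
    also have "\<dots> = (2 * (k + R) + 1) ^ m" using cube_union[OF fin, of "k + R"] cube_card[of m "k + R"] by simp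
    finally show ?thesis .
  qed
  have lo: "(2 * k + 1) ^ m \<le> v * F (k + R)" for k
  proof -
    have "(2 * k + 1) ^ m = (\<Sum>g\<in>carrier G. card (fib g k))" using cube_union[OF fin] cube_card by simp
    also have "\<dots> \<le> (\<Sum>g\<in>carrier G. F (k + R))"
    proof (rule sum_mono)
      fix g assume g: "g \<in> carrier G"
      show "card (fib g k) \<le> F (k + R)"
        using shift_le2[of "yy g" R k] yy[OF g] Rb[OF g] unfolding F_def by auto
    qed
    also have "\<dots> = v * F (k + R)" by (simp add: v_def)
    finally show ?thesis .
  qed
  have LF: "kernel_lattice G m b \<inter> cube m k = fib \<one> k" for k
    unfolding kernel_lattice_def fib_def cube_def phi_def by auto
  define f where "f k = real (F k) / (2 * real k + 1) ^ m" for k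
  define u where "u k = (1 / real v) * ((2 * real k + (2 * real R + 1)) / (2 * real k + 1)) ^ m" for k
  define l where "l k = (1 / real v) * ((2 * real k + (1 - 2 * real R)) / (2 * real k + 1)) ^ m" for k
  have "u \<longlonglongrightarrow> (1 / real v) * 1 ^ m"
    unfolding u_def by (intro tendsto_intros ratio_lim)
  then have ul: "u \<longlonglongrightarrow> 1 / real v" by simp
  have "l \<longlonglongrightarrow> (1 / real v) * 1 ^ m"
    unfolding l_def by (intro tendsto_intros ratio_lim)
  then have ll: "l \<longlonglongrightarrow> 1 / real v" by simp
  have fu: "f k \<le> u k" for k
  proof -
    have d: "(2 * real k + 1) ^ m > 0" by simp
    have "real v * real (F k) \<le> (2 * real k + (2 * real R + 1)) ^ m"
      using up[of k] by (metis (mono_tags, lifting) of_nat_le_iff of_nat_mult of_nat_power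
          add.commute add.left_commute distrib_left of_nat_add of_nat_1 of_nat_numeral)
    then show ?thesis unfolding f_def u_def using d vpos
      by (simp add: power_divide field_simps)
  qed
  have lf: "l k \<le> f k" if "k \<ge> R" for k
  proof -
    have d: "(2 * real k + 1) ^ m > 0" by simp
    have "(2 * (k - R) + 1) ^ m \<le> v * F k" using lo[of "k - R"] that by simp
    then have "real ((2 * (k - R) + 1) ^ m) \<le> real v * real (F k)"
      by (metis of_nat_le_iff of_nat_mult)
    moreover have "real ((2 * (k - R) + 1) ^ m) = (2 * real k + (1 - 2 * real R)) ^ m"
      using that by (simp add: of_nat_diff algebra_simps)
    ultimately have "(2 * real k + (1 - 2 * real R)) ^ m \<le> real v * real (F k)" by simp
    then show ?thesis unfolding f_def l_def using d vpos
      by (simp add: power_divide field_simps)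
  qed
  have "f \<longlonglongrightarrow> 1 / real v"
    by (rule tendsto_sandwich[OF _ _ ll ul])
       (auto simp: fu eventually_sequentially intro!: exI[of _ R] lf)
  then show ?thesis
    unfolding has_density_def f_def F_def LF v_def order_def .
qed

end

definition cv :: "nat list \<Rightarrow> nat \<Rightarrow> int" where
  "cv xs = foldr (\<lambda>i acc j. unitv i j + acc j) xs (\<lambda>_. 0)"

lemma cv_eq: "cv xs j = (if j = 0 then 0 else int (count_list xs j))"
  by (induction xs) (auto simp: cv_def unitv_def)

lemma cv_zvec: "set xs \<subseteq> {..m} \<Longrightarrow> cv xs \<in> zvec m"
  by (induction xs) (auto simp: cv_def unitv_def zvec_def)

lemma count_sum_le: "finite A \<Longrightarrow> (\<Sum>j\<in>A. count_list xs j) \<le> length xs"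
proof (induction xs)
  case Nil then show ?case by simp
next
  case (Cons a xs)
  have "(\<Sum>j\<in>A. count_list (a # xs) j) = (\<Sum>j\<in>A. count_list xs j) + (\<Sum>j\<in>A. if a = j then 1 else 0)"
    by (subst sum.distrib[symmetric]) (rule sum.cong, auto)
  also have "(\<Sum>j\<in>A. if a = j then 1 else 0) \<le> (1::nat)" using Cons.prems by (simp add: sum.delta)
  finally show ?case using Cons by simp
qed

lemma count_sum_eq: "finite A \<Longrightarrow> set xs \<subseteq> A \<Longrightarrow> (\<Sum>j\<in>A. count_list xs j) = length xs"
proof (induction xs)
  case Nil then show ?case by simp
next
  case (Cons a xs)
  have "(\<Sum>j\<in>A. count_list (a # xs) j) = (\<Sum>j\<in>A. count_list xs j) + (\<Sum>j\<in>A. if a = j then 1 else 0)"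
    by (subst sum.distrib[symmetric]) (rule sum.cong, auto)
  also have "(\<Sum>j\<in>A. if a = j then 1 else 0) = (1::nat)" using Cons.prems by (simp add: sum.delta)
  finally show ?case using Cons by simp
qed

locale partB = normal L "Zm m" for L m +
  fixes h :: nat
  assumes dist: "\<forall>x\<in>L. \<forall>y\<in>L. x \<noteq> y \<longrightarrow> d_a m x y > int h"
begin

definition bb where "bb i = L #>\<^bsub>Zm m\<^esub> unitv i"

lemma Q_group: "group (Zm m Mod L)" by (rule factorgroup_is_group)

lemma coset_carrier: "x \<in> zvec m \<Longrightarrow> L #>\<^bsub>Zm m\<^esub> x \<in> carrier (Zm m Mod L)"
  by (simp add: carrier_FactGroup)

lemma bb_carrier: "i \<le> m \<Longrightarrow> bb i \<in> carrier (Zm m Mod L)"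
  unfolding bb_def by (rule coset_carrier) (simp add: unitv_def zvec_def)

lemma L_zero: "L #>\<^bsub>Zm m\<^esub> (\<lambda>_. 0) = L"
proof -
  have "(\<lambda>_. 0) \<in> L" using subgroup.one_closed[OF subgroup_axioms] by simp
  then show ?thesis by (rule rcos_const[OF is_group])
qed

lemma ts_mod: "set xs \<subseteq> {..m} \<Longrightarrow> tuple_sum (Zm m Mod L) bb xs = L #>\<^bsub>Zm m\<^esub> cv xs"
proof (induction xs)
  case Nil then show ?case by (simp add: tuple_sum_def cv_def L_zero)
next
  case (Cons a xs)
  have ua: "unitv a \<in> zvec m" using Cons.prems by (simp add: unitv_def zvec_def)
  have cz: "cv xs \<in> zvec m" using Cons.prems by (simp add: cv_zvec)
  have IH: "tuple_sum (Zm m Mod L) bb xs = L #>\<^bsub>Zm m\<^esub> cv xs" using Cons by simp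
  have "tuple_sum (Zm m Mod L) bb (a # xs) = bb a <#>\<^bsub>Zm m\<^esub> tuple_sum (Zm m Mod L) bb xs"
    by (simp add: tuple_sum_def)
  also have "\<dots> = L #>\<^bsub>Zm m\<^esub> (unitv a \<otimes>\<^bsub>Zm m\<^esub> cv xs)"
    unfolding IH bb_def by (rule rcos_sum) (simp_all add: ua cz)
  also have "unitv a \<otimes>\<^bsub>Zm m\<^esub> cv xs = cv (a # xs)" by (simp add: cv_def)
  finally show ?case .
qed

lemma key:
  assumes xs: "xs \<in> index_tuples m h" and ys: "ys \<in> index_tuples m h"
    and eq: "L #>\<^bsub>Zm m\<^esub> cv xs = L #>\<^bsub>Zm m\<^esub> cv ys"
  shows "xs = ys"
proof -
  have sx: "set xs \<subseteq> {..m}" "length xs = h" "sorted xs" using xs by (auto simp: index_tuples_def)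
  have sy: "set ys \<subseteq> {..m}" "length ys = h" "sorted ys" using ys by (auto simp: index_tuples_def)
  have cx: "cv xs \<in> zvec m" and cy: "cv ys \<in> zvec m" using sx sy cv_zvec by auto
  have "cv xs \<in> L #>\<^bsub>Zm m\<^esub> cv ys"
    using eq rcos_self[OF _ subgroup_axioms] cx by (metis Zm_carrier)
  then have "cv xs \<otimes>\<^bsub>Zm m\<^esub> inv\<^bsub>Zm m\<^esub> cv ys \<in> L"
    using rcos_module_imp[OF is_group] cy by simp
  then have wL: "(\<lambda>j. cv xs j - cv ys j) \<in> L" using cy by simp
  have zL: "(\<lambda>_. 0) \<in> L" using subgroup.one_closed[OF subgroup_axioms] by simp
  have cnt: "count_list xs j = count_list ys j" if "j \<noteq> 0" for j
  proof (rule ccontr)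
    assume ne: "count_list xs j \<noteq> count_list ys j"
    then have "(\<lambda>j. cv xs j - cv ys j) \<noteq> (\<lambda>_. 0)" using that
      by (auto simp: fun_eq_iff cv_eq intro!: exI[of _ j])
    then have gt: "d_a m (\<lambda>j. cv xs j - cv ys j) (\<lambda>_. 0) > int h" using dist wL zL by blast
    have "(\<Sum>i\<in>{1..m}. if cv xs i - cv ys i > 0 then cv xs i - cv ys i - 0 else 0) \<le> (\<Sum>i\<in>{1..m}. int (count_list xs i))"
      (is "?L1 \<le> ?M1") by (rule sum_mono) (auto simp: cv_eq)
    moreover have "?M1 \<le> int h" 
    proof -
      have "(\<Sum>i\<in>{1..m}. int (count_list xs i)) = int (\<Sum>i\<in>{1..m}. count_list xs i)" by (simp only: of_nat_sum)
      then show ?thesis using count_sum_le[of "{1..m}" xs, OF finite_atLeastAtMost] sx by linarith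
    qed
    ultimately have a1: "?L1 \<le> int h" by linarith
    have "(\<Sum>i\<in>{1..m}. if cv xs i - cv ys i < 0 then 0 - (cv xs i - cv ys i) else 0) \<le> (\<Sum>i\<in>{1..m}. int (count_list ys i))"
      (is "?L2 \<le> ?M2") by (rule sum_mono) (auto simp: cv_eq)
    moreover have "?M2 \<le> int h" 
    proof -
      have "(\<Sum>i\<in>{1..m}. int (count_list ys i)) = int (\<Sum>i\<in>{1..m}. count_list ys i)" by (simp only: of_nat_sum)
      then show ?thesis using count_sum_le[of "{1..m}" ys, OF finite_atLeastAtMost] sy by linarith
    qed
    ultimately have a2: "?L2 \<le> int h" by linarith
    have "d_a m (\<lambda>j. cv xs j - cv ys j) (\<lambda>_. 0) \<le> int h"
      unfolding d_a_def using a1 a2 by simp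
    then show False using gt by simp
  qed
  have c0: "count_list xs 0 = count_list ys 0"
  proof -
    have A: "{..m} = insert 0 {1..m}" by auto
    have "count_list xs 0 + (\<Sum>j\<in>{1..m}. count_list xs j) = h"
      using count_sum_eq[of "{..m}" xs] sx by (simp add: A)
    moreover have "count_list ys 0 + (\<Sum>j\<in>{1..m}. count_list ys j) = h"
      using count_sum_eq[of "{..m}" ys] sy by (simp add: A)
    moreover have "(\<Sum>j\<in>{1..m}. count_list xs j) = (\<Sum>j\<in>{1..m}. count_list ys j)"
      using cnt by (intro sum.cong) auto
    ultimately show ?thesis by linarith
  qed
  have "mset xs = mset ys"
    by (rule multiset_eqI) (metis c0 cnt count_mset)
  then have "sort ys = xs" using properties_for_sort[of xs ys] sx by simp
  then show ?thesis using sorted_sort_id[OF sy(3)] by simp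
qed

lemma t_index: "h \<ge> 1 \<Longrightarrow> k \<le> m \<Longrightarrow> replicate (h - 1) 0 @ [k] \<in> index_tuples m h"
  by (auto simp: index_tuples_def sorted_append)

lemma cv_t: "cv (replicate n 0 @ [k]) = unitv k"
  by (auto simp: fun_eq_iff cv_eq unitv_def)

lemma Bh: assumes h1: "h \<ge> 1" shows "Bh_set (Zm m Mod L) h m bb"
proof -
  have inj: "inj_on (tuple_sum (Zm m Mod L) bb) (index_tuples m h)"
    by (rule inj_onI) (use key ts_mod in \<open>force simp: index_tuples_def\<close>)
  have injb: "inj_on bb {..m}"
  proof (rule inj_onI)
    fix i j assume i: "i \<in> {..m}" and j: "j \<in> {..m}" and e: "bb i = bb j"
    have "L #>\<^bsub>Zm m\<^esub> cv (replicate (h - 1) 0 @ [i]) = L #>\<^bsub>Zm m\<^esub> cv (replicate (h - 1) 0 @ [j])"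
      using e by (simp add: cv_t bb_def)
    then have "replicate (h - 1) 0 @ [i] = replicate (h - 1) 0 @ [j]"
      using key[OF t_index[OF h1] t_index[OF h1]] i j by auto
    then show "i = j" by simp
  qed
  show ?thesis unfolding Bh_set_def using inj injb bb_carrier by auto
qed

lemma gen: "generate (Zm m Mod L) (bb ` {..m}) = carrier (Zm m Mod L)"
proof
  interpret Q: group "Zm m Mod L" by (rule Q_group)
  have sub: "bb ` {..m} \<subseteq> carrier (Zm m Mod L)" using bb_carrier by auto
  show "generate (Zm m Mod L) (bb ` {..m}) \<subseteq> carrier (Zm m Mod L)"
    by (rule Q.generate_incl[OF sub])
  have sg: "subgroup (generate (Zm m Mod L) (bb ` {..m})) (Zm m Mod L)"
    by (rule Q.generate_is_subgroup[OF sub])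
  have bin: "bb i \<in> generate (Zm m Mod L) (bb ` {..m})" if "i \<in> {1..m}" for i
    using that by (intro generate.incl) auto
  have main: "\<forall>x. x \<in> zvec m \<longrightarrow> (\<Sum>i\<in>{1..m}. nat \<bar>x i\<bar>) = n \<longrightarrow>
      L #>\<^bsub>Zm m\<^esub> x \<in> generate (Zm m Mod L) (bb ` {..m})" for n
  proof (induction n rule: less_induct)
    case (less n)
    show ?case
    proof (intro allI impI)
      fix x assume xz: "x \<in> zvec m" and xn: "(\<Sum>i\<in>{1..m}. nat \<bar>x i\<bar>) = n"
      show "L #>\<^bsub>Zm m\<^esub> x \<in> generate (Zm m Mod L) (bb ` {..m})"
      proof (cases "\<forall>i\<in>{1..m}. x i = 0")
        case True
        then have "x = (\<lambda>_. 0)" using xz by (auto simp: zvec_def fun_eq_iff)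
        then show ?thesis using L_zero generate.one[of "Zm m Mod L"] by simp
      next
        case False
        then obtain i where i: "i \<in> {1..m}" "x i \<noteq> 0" by blast
        have ui: "unitv i \<in> zvec m" using i by (auto simp: unitv_def zvec_def)
        have dec: "(\<Sum>j\<in>{1..m}. nat \<bar>x' j\<bar>) < n"
          if x': "\<forall>j. j \<noteq> i \<longrightarrow> x' j = x j" "\<bar>x' i\<bar> < \<bar>x i\<bar>" for x'
        proof -
          have "(\<Sum>j\<in>{1..m}. nat \<bar>x' j\<bar>) = nat \<bar>x' i\<bar> + (\<Sum>j\<in>{1..m} - {i}. nat \<bar>x' j\<bar>)"
            using i by (simp add: sum.remove)
          also have "(\<Sum>j\<in>{1..m} - {i}. nat \<bar>x' j\<bar>) = (\<Sum>j\<in>{1..m} - {i}. nat \<bar>x j\<bar>)"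
            using x' by (intro sum.cong) auto
          also have "nat \<bar>x' i\<bar> + (\<Sum>j\<in>{1..m} - {i}. nat \<bar>x j\<bar>) < nat \<bar>x i\<bar> + (\<Sum>j\<in>{1..m} - {i}. nat \<bar>x j\<bar>)"
            using x'(2) by simp
          also have "\<dots> = (\<Sum>j\<in>{1..m}. nat \<bar>x j\<bar>)"
            using i by (simp add: sum.remove)
          finally show ?thesis using xn by simp
        qed
        show ?thesis
        proof (cases "x i > 0")
          case True
          define x' where "x' = (\<lambda>j. x j - unitv i j)"
          have x'z: "x' \<in> zvec m" using xz ui by (auto simp: x'_def zvec_def)
          have "(\<Sum>j\<in>{1..m}. nat \<bar>x' j\<bar>) < n"
            by (rule dec) (use True i in \<open>auto simp: x'_def unitv_def\<close>)
          then have g1: "L #>\<^bsub>Zm m\<^esub> x' \<in> generate (Zm m Mod L) (bb ` {..m})"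
            using less.IH x'z by blast
          have "x = x' \<otimes>\<^bsub>Zm m\<^esub> unitv i" by (simp add: x'_def)
          then have "L #>\<^bsub>Zm m\<^esub> x = (L #>\<^bsub>Zm m\<^esub> x') \<otimes>\<^bsub>Zm m Mod L\<^esub> bb i"
            using rcos_sum[of x' "unitv i"] x'z ui by (simp add: bb_def)
          then show ?thesis using g1 bin[OF i(1)] generate.eng by metis
        next
          case False
          then have neg: "x i < 0" using i by simp
          define x' where "x' = (\<lambda>j. x j + unitv i j)"
          have x'z: "x' \<in> zvec m" using xz ui by (auto simp: x'_def zvec_def)
          have "(\<Sum>j\<in>{1..m}. nat \<bar>x' j\<bar>) < n"
            by (rule dec) (use neg i in \<open>auto simp: x'_def unitv_def\<close>)
          then have g1: "L #>\<^bsub>Zm m\<^esub> x' \<in> generate (Zm m Mod L) (bb ` {..m})"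
            using less.IH x'z by blast
          have "x' = x \<otimes>\<^bsub>Zm m\<^esub> unitv i" by (simp add: x'_def)
          then have e: "L #>\<^bsub>Zm m\<^esub> x' = (L #>\<^bsub>Zm m\<^esub> x) \<otimes>\<^bsub>Zm m Mod L\<^esub> bb i"
            using rcos_sum[of x "unitv i"] xz ui by (simp add: bb_def)
          have c1: "L #>\<^bsub>Zm m\<^esub> x \<in> carrier (Zm m Mod L)" by (rule coset_carrier[OF xz])
          have c2: "bb i \<in> carrier (Zm m Mod L)" using i by (intro bb_carrier) auto
          have c3: "L #>\<^bsub>Zm m\<^esub> x' \<in> carrier (Zm m Mod L)" by (rule coset_carrier[OF x'z])
          have "L #>\<^bsub>Zm m\<^esub> x = (L #>\<^bsub>Zm m\<^esub> x') \<otimes>\<^bsub>Zm m Mod L\<^esub> inv\<^bsub>Zm m Mod L\<^esub> bb i"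
            using Q.inv_solve_right[OF c1 c3 c2] e by simp
          moreover have "inv\<^bsub>Zm m Mod L\<^esub> bb i \<in> generate (Zm m Mod L) (bb ` {..m})"
            using subgroup.m_inv_closed[OF sg bin[OF i(1)]] .
          ultimately show ?thesis using g1 subgroup.m_closed[OF sg] by metis
        qed
      qed
    qed
  qed
  show "carrier (Zm m Mod L) \<subseteq> generate (Zm m Mod L) (bb ` {..m})"
  proof
    fix cc assume "cc \<in> carrier (Zm m Mod L)"
    then obtain x where "x \<in> zvec m" "cc = L #>\<^bsub>Zm m\<^esub> x" by (auto simp: carrier_FactGroup)
    then show "cc \<in> generate (Zm m Mod L) (bb ` {..m})" using main by blast
  qed
qed

end


theorem mainTheorem8:
  fixes h m :: nat
  assumes "h \<ge> 1" and "m \<ge> 1"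
  shows "(\<forall>(G :: 'a monoid) (b :: nat \<Rightarrow> 'a).
            comm_group G \<and> finite (carrier G) \<and> b 0 = \<one>\<^bsub>G\<^esub> \<and> Bh_set G h m b
            \<and> generate G (b ` {..m}) = carrier G \<longrightarrow>
              sublattice m (kernel_lattice G m b)
            \<and> (\<forall>x\<in>kernel_lattice G m b. \<forall>y\<in>kernel_lattice G m b. x \<noteq> y \<longrightarrow> d_a m x y > int h)
            \<and> has_density m (kernel_lattice G m b) (1 / real (order G)))
       \<and> (\<forall>L. sublattice m L \<and> (\<forall>x\<in>L. \<forall>y\<in>L. x \<noteq> y \<longrightarrow> d_a m x y > int h) \<longrightarrow>
            (\<exists>b. Bh_set (Zm m Mod L) h m b
                 \<and> generate (Zm m Mod L) (b ` {..m}) = carrier (Zm m Mod L)))"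
proof (intro conjI allI impI)
  fix G :: "'a monoid" and b :: "nat \<Rightarrow> 'a"
  assume H: "comm_group G \<and> finite (carrier G) \<and> b 0 = \<one>\<^bsub>G\<^esub> \<and> Bh_set G h m b
            \<and> generate G (b ` {..m}) = carrier G"
  then have cg: "comm_group G" and fin: "finite (carrier G)" and b0: "b 0 = \<one>\<^bsub>G\<^esub>"
    and bh: "Bh_set G h m b" and gen: "generate G (b ` {..m}) = carrier G" by auto
  have bc: "\<And>i. i \<le> m \<Longrightarrow> b i \<in> carrier G" using bh by (simp add: Bh_set_def)
  interpret A: partA G m b using cg bc by (simp add: partA_def partA_axioms_def)
  show "sublattice m (kernel_lattice G m b)"
    unfolding sublattice_def A.kernel_eq by (rule group_hom.subgroup_kernel[OF A.phi_hom])
  show "\<forall>x\<in>kernel_lattice G m b. \<forall>y\<in>kernel_lattice G m b. x \<noteq> y \<longrightarrow> d_a m x y > int h"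
    using A.dist_part[OF b0] bh by (simp add: Bh_set_def)
  show "has_density m (kernel_lattice G m b) (1 / real (order G))"
    by (rule A.density_part[OF fin A.phi_surj[OF b0 gen]])
next
  fix L assume H: "sublattice m L \<and> (\<forall>x\<in>L. \<forall>y\<in>L. x \<noteq> y \<longrightarrow> d_a m x y > int h)"
  have nL: "normal L (Zm m)"
    using comm_group.subgroup_imp_normal[OF Zm_comm_group] H by (simp add: sublattice_def)
  interpret B: partB L m h using nL H by (simp add: partB_def partB_axioms_def)
  show "\<exists>b. Bh_set (Zm m Mod L) h m b \<and> generate (Zm m Mod L) (b ` {..m}) = carrier (Zm m Mod L)"
    using B.Bh[OF assms(1)] B.gen by blast
qed

end
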